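(* Let $k$ be odd, $n=4k$, $d=\frac{(3^{2k}+1)^2}{20}$, $a\in\mathrm{GF}(3^n)^*$, and $r$ a nonsquare in $\mathrm{GF}(3^4)$. Regard $$q_1(x)=\mathrm{Tr}_1^n\big(a x^{3^{2(k+1)}+1}-x^{3^{2k}+1}\big),\qquad q_2(x)=\mathrm{Tr}_1^n\big(a r x^{3^{2(k+1)}+1}-r^{d}x^{3^{2k}+1}\big)$$ as quadratic forms in $n$ variables over $\mathrm{GF}(3)$ (via coordinates with respect to a basis of $\mathrm{GF}(3^n)$ over $\mathrm{GF}(3)$). Then the rank of $q_1$ is one of $n$, $n-2$, $n-4$, and the rank of $q_2$ equals $n$.
   Context: $\mathrm{Tr}_1^n(x)=x+x^3+\cdots+x^{3^{n-1}}$ is the absolute trace from $\mathrm{GF}(3^n)$ to $\mathrm{GF}(3)$. Writing $x=\sum_{i=1}^n x_i\alpha_i$ for a fixed basis $\{\alpha_1,\dots,\alpha_n\}$ of $\mathrm{GF}(3^n)$ over $\mathrm{GF}(3)$, each $q_j$ becomes a quadratic form in $x_1,\dots,x_n$ with coefficients in $\mathrm{GF}(3)$; its rank is the minimal number of variables it depends on after an invertible linear change of variables, equivalently $n-\dim_{\mathrm{GF}(3)}\{y: q_j(x+y)=q_j(x)\ \forall x\}$. *)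

theory Defs
  imports Main
begin

text \<open>The finite field GF(3^n) is modelled as a finite field type 'a with
  CARD('a) = 3^n.  Its prime field GF(3) is the set of roots of x^3 = x,
  and GF(3^4) is the set of roots of x^(3^4) = x.\<close>

definition GF3 :: "'a::field set" where
  "GF3 = {x. x ^ 3 = x}"

definition GF81 :: "'a::field set" where
  "GF81 = {x. x ^ (3 ^ 4) = x}"

definition tr :: "nat \<Rightarrow> 'a::field \<Rightarrow> 'a" where
  "tr n x = (\<Sum>i<n. x ^ (3 ^ i))"

definition span3 :: "'a::field set \<Rightarrow> 'a set" where
  "span3 B = {\<Sum>b\<in>B. c b * b | c. \<forall>b\<in>B. c b \<in> GF3}"

definition dim3 :: "'a::field set \<Rightarrow> nat" where
  "dim3 V = (LEAST m. \<exists>B. finite B \<and> card B = m \<and> B \<subseteq> V \<and> V = span3 B)"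

definition qrad :: "('a::field \<Rightarrow> 'a) \<Rightarrow> 'a set" where
  "qrad q = {y. \<forall>x. q (x + y) = q x}"

definition qrank :: "nat \<Rightarrow> ('a::field \<Rightarrow> 'a) \<Rightarrow> nat" where
  "qrank n q = n - dim3 (qrad q)"

end

theory Submission imports Defs "HOL-Computational_Algebra.Polynomial" "HOL-Library.FuncSet"
begin


lemma card_of_nat_zero: "of_nat (card (UNIV::'a set)) = (0::'a::{comm_ring_1,finite})"
proof -
  have "(\<Sum>x\<in>UNIV. x) = (\<Sum>x\<in>UNIV. x + (1::'a))"
    by (rule sum.reindex_bij_witness[where i="\<lambda>x. x + 1" and j="\<lambda>x. x - 1"]) auto
  also have "\<dots> = (\<Sum>x\<in>UNIV. x) + of_nat (card (UNIV::'a set))"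
    by (simp add: sum.distrib)
  finally show ?thesis by simp
qed

lemma char3:
  assumes "card (UNIV::'a set) = 3 ^ n"
  shows "(3::'a::{field,finite}) = 0"
proof -
  have "(3::'a) ^ n = 0" using card_of_nat_zero[where 'a='a] assms by simp
  thus ?thesis by simp
qed

lemma frob3: "(3::'a::field) = 0 \<Longrightarrow> (u + v) ^ 3 = u ^ 3 + (v::'a) ^ 3"
proof -
  assume h: "(3::'a) = 0"
  have "(u+v)^3 = u^3 + v^3 + 3 * (u^2*v + u*v^2)" by (simp add: algebra_simps power2_eq_square power3_eq_cube)
  thus ?thesis using h by simp
qed

lemma frob: "(3::'a::field) = 0 \<Longrightarrow> (u + v) ^ (3^j) = u ^ (3^j) + (v::'a) ^ (3^j)"
proof (induction j)
  case 0 then show ?case by simp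
next
  case (Suc j)
  have "(u+v)^(3^Suc j) = ((u+v)^(3^j))^3" by (simp add: power_mult[symmetric] mult.commute)
  also have "\<dots> = (u^(3^j))^3 + (v^(3^j))^3" using Suc by (simp add: frob3)
  finally show ?case by (simp add: power_mult[symmetric] mult.commute)
qed

lemma neg_pow3: "(- (u::'a::field)) ^ (3^j) = - (u ^ (3^j))"
  by (simp add: power_minus_odd)

lemma frob_diff: "(3::'a::field) = 0 \<Longrightarrow> (u - v) ^ (3^j) = u ^ (3^j) - (v::'a) ^ (3^j)"
  using frob[of u "-v" j] by (simp add: neg_pow3)

lemma two_ne0: "(3::'a::field) = 0 \<Longrightarrow> (2::'a) \<noteq> 0"
proof
  assume "(3::'a) = 0" "(2::'a) = 0"
  hence "(3::'a) - 2 = 0" by simp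
  thus False by simp
qed

lemma fermat_nz:
  assumes "(x::'a::{field,finite}) \<noteq> 0"
  shows "x ^ (card (UNIV::'a set) - 1) = 1"
proof -
  let ?U = "UNIV - {0::'a}"
  have "(\<Prod>y\<in>?U. x * y) = (\<Prod>y\<in>?U. y)"
    by (rule prod.reindex_bij_witness[where i="\<lambda>y. y / x" and j="\<lambda>y. x * y"]) (use assms in auto)
  moreover have "(\<Prod>y\<in>?U. x * y) = x ^ card ?U * (\<Prod>y\<in>?U. y)"
    by (simp add: prod.distrib)
  moreover have "(\<Prod>y\<in>?U. y) \<noteq> 0" by simp
  moreover have "card ?U = card (UNIV::'a set) - 1" by (simp add: card_Diff_singleton)
  ultimately show ?thesis by (metis mult_cancel_right1)
qed

lemma fermat:
  shows "(x::'a::{field,finite}) ^ card (UNIV::'a set) = x"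
proof (cases "x = 0")
  case True then show ?thesis using card_gt_0_iff[of "UNIV::'a set"] by simp
next
  case False
  have "card (UNIV::'a set) = Suc (card (UNIV::'a set) - 1)" using card_gt_0_iff[of "UNIV::'a set"] by simp
  then have "x ^ (card (UNIV::'a set)) = x * x ^ (card (UNIV::'a set) - 1)" by (metis power_Suc)
  then show ?thesis using fermat_nz[OF False] by simp
qed



lemma tr_pow3:
  assumes F: "(w::'a::field) ^ (3^n) = w"
  shows "tr n (w ^ 3) = tr n w"
proof -
  have "tr n (w^3) = (\<Sum>i<n. w ^ (3 ^ Suc i))"
    unfolding tr_def by (intro sum.cong refl) (simp add: power_mult[symmetric] mult.commute)
  also have "\<dots> = (\<Sum>i<Suc n. w ^ (3^i)) - w ^ (3^0)"
    by (subst sum.lessThan_Suc_shift) simp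
  also have "\<dots> = tr n w" unfolding tr_def using F by simp
  finally show ?thesis .
qed

lemma tr_powj:
  fixes w :: "'a::field"
  assumes F: "\<And>w::'a::field. w ^ (3^n) = w"
  shows "tr n (w ^ (3^j)) = tr n w"
proof (induction j)
  case 0 then show ?case by simp
next
  case (Suc j)
  have eq: "w ^ (3 ^ Suc j) = (w ^ (3^j))^3" by (simp add: power_mult[symmetric] mult.commute)
  have "tr n (w ^ (3 ^ Suc j)) = tr n ((w ^ (3^j))^3)" by (simp only: eq)
  also have "\<dots> = tr n (w ^ (3^j))" using tr_pow3[of "w^(3^j)" n] F by blast
  finally show ?case using Suc by simp
qed

lemma tr_add: "(3::'a::field) = 0 \<Longrightarrow> tr n (u + v) = tr n u + tr n (v::'a)"
  unfolding tr_def by (simp add: frob sum.distrib)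

lemma tr_neg: "tr n (- (u::'a::field)) = - tr n u"
  unfolding tr_def by (simp add: neg_pow3 sum_negf)

lemma tr_diff: "(3::'a::field) = 0 \<Longrightarrow> tr n (u - v) = tr n u - tr n (v::'a)"
  using tr_add[of n u "-v"] tr_neg[of n v] by simp

lemma tr_zero: "tr n (0::'a::field) = 0"
  unfolding tr_def by (simp add: zero_power)

lemma tr_shift:
  fixes A x y :: "'a::field"
  assumes F: "\<And>w::'a::field. w ^ (3^n) = w" and M: "M \<le> n"
  shows "tr n (A * x ^ (3^M) * y) = tr n (x * (A * y) ^ (3^(n-M)))"
proof -
  have "tr n (A * x ^ (3^M) * y) = tr n ((A * x ^ (3^M) * y) ^ (3^(n-M)))"
    by (rule tr_powj[OF F, symmetric])
  also have "(A * x ^ (3^M) * y) ^ (3^(n-M)) = (A*y) ^ (3^(n-M)) * x ^ (3^M * 3^(n-M))"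
    by (simp add: power_mult_distrib power_mult algebra_simps)
  also have "3^M * 3^(n-M) = (3::nat)^n" using M by (simp add: power_add[symmetric])
  finally show ?thesis by (simp add: F mult.commute)
qed

definition Lmap :: "nat \<Rightarrow> nat \<Rightarrow> nat \<Rightarrow> 'a::field \<Rightarrow> 'a \<Rightarrow> 'a \<Rightarrow> 'a" where
  "Lmap n M K A B y = (A*y)^(3^(n-M)) + A*y^(3^M) + (B*y)^(3^(n-K)) + B*y^(3^K)"

lemma quad_expand:
  fixes A B x y :: "'a::field"
  assumes C3: "(3::'a::field) = 0" and F: "\<And>w::'a. w ^ (3^n) = w"
    and M: "M \<le> n" and K: "K \<le> n"
  shows "tr n (A * (x+y) ^ (3^M+1) + B * (x+y) ^ (3^K+1)) =
     tr n (A * x ^ (3^M+1) + B * x ^ (3^K+1)) + tr n (A * y ^ (3^M+1) + B * y ^ (3^K+1))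
     + tr n (x * Lmap n M K A B y)"
proof -
  have e: "(x+y) ^ (3^J+1) = x^(3^J+1) + y^(3^J+1) + x^(3^J)*y + y^(3^J)*x" for J
  proof -
    have "(x+y)^(3^J) = x^(3^J) + y^(3^J)" by (rule frob[OF C3])
    then show ?thesis by (simp add: algebra_simps)
  qed
  have "A * (x+y) ^ (3^M+1) + B * (x+y) ^ (3^K+1) =
        (A * x ^ (3^M+1) + B * x ^ (3^K+1)) + (A * y ^ (3^M+1) + B * y ^ (3^K+1))
        + (A * x^(3^M) * y) + x * (A * y^(3^M)) + (B * x^(3^K) * y) + x * (B * y^(3^K))"
    unfolding e by (simp add: algebra_simps)
  then have "tr n (A * (x+y) ^ (3^M+1) + B * (x+y) ^ (3^K+1)) =
     tr n (A * x ^ (3^M+1) + B * x ^ (3^K+1)) + tr n (A * y ^ (3^M+1) + B * y ^ (3^K+1))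
     + tr n (A * x^(3^M) * y) + tr n (x * (A * y^(3^M))) + tr n (B * x^(3^K) * y) + tr n (x * (B * y^(3^K)))"
    by (simp add: tr_add[OF C3])
  also have "\<dots> = tr n (A * x ^ (3^M+1) + B * x ^ (3^K+1)) + tr n (A * y ^ (3^M+1) + B * y ^ (3^K+1))
     + (tr n (x * (A*y)^(3^(n-M))) + tr n (x * (A * y^(3^M))) + tr n (x * (B*y)^(3^(n-K))) + tr n (x * (B * y^(3^K))))"
    using tr_shift[OF F M, of A x y] tr_shift[OF F K, of B x y] by (simp add: algebra_simps)
  also have "(tr n (x * (A*y)^(3^(n-M))) + tr n (x * (A * y^(3^M))) + tr n (x * (B*y)^(3^(n-K))) + tr n (x * (B * y^(3^K))))
     = tr n (x * Lmap n M K A B y)"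
    unfolding Lmap_def by (simp add: tr_add[OF C3] algebra_simps)
  finally show ?thesis .
qed



lemma tr_nonzero:
  assumes card: "card (UNIV::'a set) = 3 ^ n" and n: "n > 0"
  shows "\<exists>z::'a::{field,finite}. tr n z \<noteq> 0"
proof (rule ccontr)
  assume "\<not> ?thesis"
  hence all: "\<And>z::'a. tr n z = 0" by blast
  define p :: "'a poly" where "p = (\<Sum>i<n. monom 1 (3^i))"
  have pp: "poly p z = tr n z" for z
    unfolding p_def tr_def by (simp add: poly_sum poly_monom)
  have "coeff p 1 = (\<Sum>i<n. if 3^i = (1::nat) then 1 else 0)"
    unfolding p_def by (simp add: coeff_sum coeff_monom)
  also have "\<dots> = (\<Sum>i<n. if i = 0 then 1 else 0)"
  proof (intro sum.cong refl)
    fix i :: nat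
    have "((3::nat)^i = 1) = (i = 0)" by (cases i) auto
    thus "(if 3^i = (1::nat) then 1 else 0) = (if i = 0 then 1 else (0::'a))" by simp
  qed
  also have "\<dots> = 1" using n by simp
  finally have "coeff p 1 = 1" by simp
  hence p0: "p \<noteq> 0" by auto
  have "degree p \<le> 3^(n-1)"
    unfolding p_def
  proof (intro degree_sum_le)
    fix i assume "i \<in> {..<n}"
    hence "(3::nat)^i \<le> 3^(n-1)" by (intro power_increasing) auto
    thus "degree (monom (1::'a) (3^i)) \<le> 3^(n-1)" by (simp add: degree_monom_eq)
  qed simp
  moreover have "card {z. poly p z = 0} \<le> degree p" by (rule card_poly_roots_bound[OF p0])
  moreover have "{z. poly p z = 0} = UNIV" using pp all by auto
  ultimately have "card (UNIV::'a set) \<le> 3^(n-1)" by simp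
  moreover have "(3::nat)^(n-1) < 3^n" using n by (intro power_strict_increasing) auto
  ultimately show False using card by linarith
qed

lemma rad_L:
  fixes A B :: "'a::{field,finite}"
  assumes card: "card (UNIV::'a set) = 3 ^ n" and n: "n > 0"
    and M: "M \<le> n" and K: "K \<le> n"
    and y: "y \<in> qrad (\<lambda>x. tr n (A * x ^ (3^M+1) + B * x ^ (3^K+1)))"
  shows "Lmap n M K A B y = 0"
proof (rule ccontr)
  assume L: "Lmap n M K A B y \<noteq> 0"
  have C3: "(3::'a) = 0" using char3[OF card] .
  have F: "\<And>w::'a. w ^ (3^n) = w" using fermat card by metis
  let ?Q = "\<lambda>x::'a. tr n (A * x ^ (3^M+1) + B * x ^ (3^K+1))"
  have Q0: "?Q 0 = 0" by (simp add: zero_power tr_zero)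
  have yy: "?Q (x + y) = ?Q x" for x using y unfolding qrad_def by blast
  have Qy: "?Q y = 0" using yy[of 0] Q0 by simp
  have "tr n (x * Lmap n M K A B y) = 0" for x
    using quad_expand[OF C3 F M K, of A x y B] yy[of x] Qy by simp
  moreover obtain z :: 'a where z: "tr n z \<noteq> 0" using tr_nonzero[OF card n] by blast
  ultimately have "tr n ((z / Lmap n M K A B y) * Lmap n M K A B y) = 0" by blast
  thus False using z L by simp
qed

lemma rad_add: "y1 \<in> qrad q \<Longrightarrow> y2 \<in> qrad q \<Longrightarrow> y1 + y2 \<in> qrad q"
  unfolding qrad_def by (simp add: add.assoc[symmetric])

lemma rad_neg: assumes "y \<in> qrad q" shows "- y \<in> qrad (q::'a::field \<Rightarrow> 'a)"
  unfolding qrad_def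
proof (intro CollectI allI)
  fix x
  have "q ((x - y) + y) = q (x - y)" using assms unfolding qrad_def by blast
  thus "q (x + - y) = q x" by simp
qed

lemma rad_zero: "0 \<in> qrad q"
  unfolding qrad_def by simp

lemma rad_scale:
  assumes "\<And>x. q (c * x) = - q x" and "c \<noteq> 0" and "y \<in> qrad q"
  shows "c * y \<in> qrad (q::'a::field \<Rightarrow> 'a)"
  unfolding qrad_def
proof (intro CollectI allI)
  fix x
  have "q (x + c*y) = q (c * (x/c + y))" using assms(2) by (simp add: algebra_simps)
  also have "\<dots> = - q (x/c + y)" by (rule assms(1))
  also have "\<dots> = - q (x/c)" using assms(3) unfolding qrad_def by simp
  also have "\<dots> = q (c * (x/c))" by (rule assms(1)[symmetric])
  finally show "q (x + c*y) = q x" using assms(2) by simp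
qed



lemma gf3_iff:
  assumes C3: "(3::'a::field) = 0"
  shows "((c::'a) \<in> GF3) = (c = 0 \<or> c = 1 \<or> c = -1)"
proof -
  have "c^3 - c = c * ((c - 1) * (c + 1))" by (simp add: algebra_simps power3_eq_cube)
  hence "(c^3 = c) = (c * ((c - 1) * (c + 1)) = 0)" by (metis eq_iff_diff_eq_0)
  also have "\<dots> = (c = 0 \<or> c = 1 \<or> c = -1)" by (auto simp: eq_neg_iff_add_eq_0 add.commute)
  finally show ?thesis unfolding GF3_def by simp
qed

lemma gf3_eq: "(3::'a::field) = 0 \<Longrightarrow> (GF3::'a set) = {0, 1, -1}"
  using gf3_iff by blast

lemma card_gf3: "(3::'a::field) = 0 \<Longrightarrow> card (GF3::'a set) = 3"
proof -
  assume C3: "(3::'a) = 0"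
  have "(1::'a) \<noteq> -1"
  proof
    assume "(1::'a) = -1" hence "(2::'a) = 0" by (simp add: eq_neg_iff_add_eq_0)
    thus False using two_ne0[OF C3] by simp
  qed
  hence "card {0::'a, 1, -1} = 3" by simp
  thus ?thesis using gf3_eq[OF C3] by metis
qed

lemma gf3_mult: "a \<in> GF3 \<Longrightarrow> b \<in> GF3 \<Longrightarrow> a * b \<in> (GF3::'a::field set)"
  unfolding GF3_def by (simp add: power_mult_distrib)
lemma gf3_neg: "a \<in> GF3 \<Longrightarrow> - a \<in> (GF3::'a::field set)"
  unfolding GF3_def by (simp add: power_minus_odd)
lemma gf3_add: "(3::'a::field) = 0 \<Longrightarrow> a \<in> GF3 \<Longrightarrow> b \<in> GF3 \<Longrightarrow> a + b \<in> (GF3::'a set)"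
  unfolding GF3_def by (simp add: frob3)
lemma gf3_diff: "(3::'a::field) = 0 \<Longrightarrow> a \<in> GF3 \<Longrightarrow> b \<in> GF3 \<Longrightarrow> a - b \<in> (GF3::'a set)"
  using gf3_add[of a "-b"] gf3_neg[of b] by simp
lemma gf3_one: "1 \<in> (GF3::'a::field set)" unfolding GF3_def by simp
lemma gf3_zero: "0 \<in> (GF3::'a::field set)" unfolding GF3_def by simp
lemma gf3_sq: "a \<in> GF3 \<Longrightarrow> a \<noteq> 0 \<Longrightarrow> a * a = (1::'a::field)"
  unfolding GF3_def by (simp add: power3_eq_cube)

locale subsp =
  fixes R :: "'a::{field,finite} set"
  assumes C3: "(3::'a) = 0"
    and zero: "0 \<in> R" and add: "\<And>x y. x \<in> R \<Longrightarrow> y \<in> R \<Longrightarrow> x + y \<in> R"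
    and neg: "\<And>x. x \<in> R \<Longrightarrow> - x \<in> R"
begin

lemma smult: assumes "c \<in> GF3" "y \<in> R" shows "c * y \<in> R"
proof -
  have "c = 0 \<or> c = 1 \<or> c = -1" using gf3_iff[OF C3, of c] assms(1) by simp
  thus ?thesis using zero neg[OF assms(2)] assms(2) by (elim disjE) simp_all
qed

lemma sum_in: "finite B \<Longrightarrow> (\<And>b. b \<in> B \<Longrightarrow> f b \<in> R) \<Longrightarrow> sum f B \<in> R"
  by (induction B rule: finite_induct) (auto intro: zero add)

lemma span_sub: assumes "B \<subseteq> R" shows "span3 B \<subseteq> R"
proof
  fix y assume "y \<in> span3 B"
  then obtain c where c: "y = (\<Sum>b\<in>B. c b * b)" "\<forall>b\<in>B. c b \<in> GF3" unfolding span3_def by blast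
  have "finite B" by simp
  thus "y \<in> R" unfolding c(1) by (rule sum_in) (use c(2) assms smult in blast)
qed

lemma self_span: "R \<subseteq> span3 R"
proof
  fix y assume y: "y \<in> R"
  have "(\<Sum>b\<in>R. (if b = y then 1 else 0) * b) = (\<Sum>b\<in>R. if b = y then b else 0)"
    by (intro sum.cong) auto
  also have "\<dots> = y" using y by simp
  finally have "y = (\<Sum>b\<in>R. (if b = y then 1 else 0) * b)" by simp
  moreover have "\<forall>b\<in>R. (if b = y then 1 else 0) \<in> (GF3::'a set)" using gf3_one gf3_zero by auto
  ultimately show "y \<in> span3 R" unfolding span3_def
    by (intro CollectI exI[where x="\<lambda>b. if b = y then 1 else 0"] conjI)
qed

definition P where "P m = (\<exists>B. finite B \<and> card B = m \<and> B \<subseteq> R \<and> R = span3 B)"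

lemma P_R: "P (card R)"
  unfolding P_def
proof (intro exI[of _ R] conjI)
  show "R = span3 R" using self_span span_sub[of R] by blast
qed simp_all

lemma card_dim: "card R = 3 ^ dim3 R"
proof -
  have d: "dim3 R = (LEAST m. P m)" unfolding dim3_def P_def by simp
  obtain B0 where B0: "finite B0" "card B0 = dim3 R" "B0 \<subseteq> R" "R = span3 B0"
    using LeastI[of P, OF P_R] unfolding d P_def by blast
  have minimal: "card B0 \<le> card B" if "B \<subseteq> R" "R = span3 B" for B
  proof -
    have "P (card B)" unfolding P_def using that finite by blast
    hence "(LEAST m. P m) \<le> card B" by (rule Least_le)
    thus ?thesis using B0(2) d by simp
  qed
  define S where "S = PiE B0 (\<lambda>_. (GF3::'a set))"
  define \<phi> where "\<phi> c = (\<Sum>b\<in>B0. c b * b)" for c :: "'a \<Rightarrow> 'a"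
  have img: "\<phi> ` S = R"
  proof
    show "\<phi> ` S \<subseteq> R" using span_sub[OF B0(3)] unfolding S_def \<phi>_def span3_def by auto
    show "R \<subseteq> \<phi> ` S"
    proof
      fix y assume "y \<in> R"
      then obtain c where c: "y = (\<Sum>b\<in>B0. c b * b)" "\<forall>b\<in>B0. c b \<in> GF3"
        using B0(4) unfolding span3_def by blast
      have "restrict c B0 \<in> S" unfolding S_def using c(2) by auto
      moreover have "\<phi> (restrict c B0) = y" unfolding \<phi>_def c(1) by (intro sum.cong) auto
      ultimately show "y \<in> \<phi> ` S" by blast
    qed
  qed
  have inj: "inj_on \<phi> S"
  proof (rule inj_onI, rule ccontr)
    fix c c' assume c: "c \<in> S" and c': "c' \<in> S" and eq: "\<phi> c = \<phi> c'" and ne: "c \<noteq> c'"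
    obtain b0 where b0: "b0 \<in> B0" "c b0 \<noteq> c' b0"
      using c c' ne unfolding S_def by (meson PiE_ext)
    define e where "e b = c b - c' b" for b
    have eG: "e b \<in> GF3" if "b \<in> B0" for b
      using c c' that gf3_diff[OF C3] unfolding S_def e_def by auto
    have e0: "e b0 \<noteq> 0" using b0 unfolding e_def by simp
    define B1 where "B1 = B0 - {b0}"
    have sum0: "(\<Sum>b\<in>B0. e b * b) = 0"
      using eq unfolding \<phi>_def e_def by (simp add: algebra_simps sum_subtractf)
    hence "e b0 * b0 + (\<Sum>b\<in>B1. e b * b) = 0"
      unfolding B1_def using B0(1) b0(1) by (simp add: sum.remove)
    hence "e b0 * b0 = - (\<Sum>b\<in>B1. e b * b)"
      by (simp add: eq_neg_iff_add_eq_0)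
    hence "e b0 * (e b0 * b0) = e b0 * (- (\<Sum>b\<in>B1. e b * b))"
      by simp
    moreover have "e b0 * (e b0 * b0) = b0"
      using gf3_sq[OF eG[OF b0(1)] e0] by (simp add: mult.assoc[symmetric])
    moreover have "e b0 * (- (\<Sum>b\<in>B1. e b * b)) = (- e b0) * (\<Sum>b\<in>B1. e b * b)" by simp
    moreover have "(- e b0) * (\<Sum>b\<in>B1. e b * b) = (\<Sum>b\<in>B1. (- e b0) * (e b * b))"
      by (rule sum_distrib_left)
    moreover have "(\<Sum>b\<in>B1. (- e b0) * (e b * b)) = (\<Sum>b\<in>B1. (- e b0 * e b) * b)"
      by (intro sum.cong refl) (simp only: mult.assoc)
    ultimately have b0e: "b0 = (\<Sum>b\<in>B1. (- e b0 * e b) * b)" by simp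
    have "R = span3 B1"
    proof
      show "span3 B1 \<subseteq> R" using B0(3) span_sub unfolding B1_def by blast
      show "R \<subseteq> span3 B1"
      proof
        fix y assume "y \<in> R"
        then obtain g where g: "y = (\<Sum>b\<in>B0. g b * b)" "\<forall>b\<in>B0. g b \<in> GF3"
          using B0(4) unfolding span3_def by blast
        have "y = g b0 * b0 + (\<Sum>b\<in>B1. g b * b)"
          unfolding g(1) B1_def using B0(1) b0(1) by (simp add: sum.remove)
        also have "\<dots> = (\<Sum>b\<in>B1. (g b0 * (- e b0 * e b) + g b) * b)"
        proof -
          have "g b0 * b0 = g b0 * (\<Sum>b\<in>B1. (- e b0 * e b) * b)"
            using arg_cong[OF b0e, of "\<lambda>z. g b0 * z"] by simp
          also have "\<dots> = (\<Sum>b\<in>B1. g b0 * ((- e b0 * e b) * b))" by (rule sum_distrib_left)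
          also have "\<dots> = (\<Sum>b\<in>B1. (g b0 * (- e b0 * e b)) * b)"
            by (intro sum.cong refl) (simp only: mult.assoc)
          finally have gb: "g b0 * b0 = (\<Sum>b\<in>B1. (g b0 * (- e b0 * e b)) * b)" .
          show ?thesis unfolding gb sum.distrib[symmetric] by (intro sum.cong refl) (simp only: distrib_right)
        qed
        finally have "y = (\<Sum>b\<in>B1. (g b0 * (- e b0 * e b) + g b) * b)" .
        moreover have "\<forall>b\<in>B1. g b0 * (- e b0 * e b) + g b \<in> GF3"
        proof
          fix b assume "b \<in> B1"
          hence b: "b \<in> B0" unfolding B1_def by simp
          have "- e b0 * e b \<in> GF3" using gf3_mult[OF gf3_neg[OF eG[OF b0(1)]] eG[OF b]] .
          hence "g b0 * (- e b0 * e b) \<in> GF3" using gf3_mult g(2) b0(1) by blast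
          thus "g b0 * (- e b0 * e b) + g b \<in> GF3" using gf3_add[OF C3] g(2) b by blast
        qed
        ultimately show "y \<in> span3 B1" unfolding span3_def
          by (intro CollectI exI[where x="\<lambda>b. g b0 * (- e b0 * e b) + g b"] conjI)
      qed
    qed
    hence "card B0 \<le> card B1" using minimal B0(3) unfolding B1_def by blast
    moreover have "card B1 < card B0" unfolding B1_def using B0(1) b0(1) by (rule card_Diff1_less)
    ultimately show False by simp
  qed
  have "card R = card S" using img inj card_image by fastforce
  also have "\<dots> = 3 ^ card B0" unfolding S_def using B0(1) by (simp add: card_PiE card_gf3[OF C3])
  finally show ?thesis using B0(2) by simp
qed

end



lemma pow81: "\<exists>v. (81::nat)^j = 80*v + 1"
proof (induction j)
  case 0 then show ?case by simp
next
  case (Suc j)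
  then obtain v where "(81::nat)^j = 80*v+1" by blast
  hence "(81::nat)^Suc j = 80*(81*v+1) + 1" by simp
  thus ?case by blast
qed

lemma geo81: "80 * (\<Sum>i<k. (81::nat)^i) + 1 = 81^k"
  by (induction k) (simp_all add: algebra_simps)

lemma geo81_odd: "odd (\<Sum>i<k. (81::nat)^i) = odd k"
  by (induction k) simp_all

lemma dd_mod:
  assumes "k = 2*j+1"
  shows "\<exists>w. ((3::nat) ^ (2*k) + 1)^2 div 20 = 5 + 80*w"
proof -
  obtain v where v: "(81::nat)^j = 80*v+1" using pow81 by blast
  have "(3::nat)^(2*k) = 9 * 81^j" using assms by (simp add: power_mult power_add)
  hence "((3::nat) ^ (2*k) + 1)^2 = 20 * (5 + 80*(324*v^2 + 9*v))"
    using v by (simp add: power2_eq_square algebra_simps)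
  hence "((3::nat) ^ (2*k) + 1)^2 div 20 = 5 + 80*(324*v^2 + 9*v)" by simp
  thus ?thesis by blast
qed

lemma card_pow_eq_le:
  assumes "m > 0"
  shows "card {x::'a::field. x ^ m = c} \<le> m"
proof -
  define p :: "'a poly" where "p = monom 1 m - [:c:]"
  have pp: "poly p x = x^m - c" for x unfolding p_def by (simp add: poly_monom)
  have "coeff p m = 1" unfolding p_def using assms by (cases m) (simp_all add: coeff_monom)
  hence p0: "p \<noteq> 0" by auto
  have "degree p \<le> m" unfolding p_def
    by (rule order.trans[OF degree_diff_le_max]) (simp add: degree_monom_eq)
  moreover have "card {x. poly p x = 0} \<le> degree p" by (rule card_poly_roots_bound[OF p0])
  moreover have "{x. poly p x = 0} = {x. x ^ m = c}" using pp by auto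
  ultimately show ?thesis by simp
qed

lemma geom_field: "((y::'a::field) - 1) * (\<Sum>j<t. y^j) = y^t - 1"
  by (induction t) (simp_all add: algebra_simps)

lemma card_pow_eq_1_ge:
  assumes m: "m > 0" and dv: "card (UNIV::'a set) - 1 = m * t"
  shows "m \<le> card {x::'a::{field,finite}. x ^ m = 1}"
proof -
  let ?N = "card (UNIV::'a set) - 1"
  have Npos: "?N > 0"
  proof -
    have "{0::'a, 1} \<subseteq> UNIV" by simp
    hence "card {0::'a, 1} \<le> card (UNIV::'a set)" by (intro card_mono) simp_all
    thus ?thesis by simp
  qed
  hence t: "t > 0" using dv by (cases t) auto
  define G :: "'a poly" where "G = (\<Sum>j<t. monom 1 (m*j))"
  have pG: "poly G x = (\<Sum>j<t. (x^m)^j)" for x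
    unfolding G_def by (simp add: poly_sum poly_monom power_mult)
  have "coeff G 0 = (\<Sum>j<t. if j = 0 then 1 else 0)"
    unfolding G_def using m by (simp add: coeff_sum coeff_monom)
  also have "\<dots> = 1" using t by simp
  finally have G0: "G \<noteq> 0" by auto
  have "degree G \<le> m*(t-1)" unfolding G_def
  proof (intro degree_sum_le)
    fix j assume "j \<in> {..<t}"
    hence "j \<le> t - 1" by auto
    hence "m*j \<le> m*(t-1)" by (rule mult_le_mono2)
    thus "degree (monom (1::'a) (m*j)) \<le> m*(t-1)" by (simp add: degree_monom_eq)
  qed simp
  hence cG: "card {x. poly G x = 0} \<le> ?N - m" using card_poly_roots_bound[OF G0] dv t
    by (simp add: algebra_simps)
  have sub: "UNIV - {0} \<subseteq> {x::'a. x^m = 1} \<union> {x. poly G x = 0}"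
  proof
    fix x :: 'a assume "x \<in> UNIV - {0}"
    hence "x^?N = 1" using fermat_nz by blast
    hence "(x^m - 1) * poly G x = 0" using geom_field[of "x^m" t] dv pG by (simp add: power_mult)
    thus "x \<in> {x::'a. x^m = 1} \<union> {x. poly G x = 0}" by auto
  qed
  have "?N = card (UNIV - {0::'a})" by (simp add: card_Diff_singleton)
  also have "\<dots> \<le> card ({x::'a. x^m = 1} \<union> {x. poly G x = 0})" by (intro card_mono sub) simp
  also have "\<dots> \<le> card {x::'a. x^m = 1} + card {x. poly G x = 0}" by (rule card_Un_le)
  finally have fin: "?N \<le> card {x::'a. x^m = 1} + card {x. poly G x = 0}" .
  have "m \<le> m*t" using t by simp
  thus ?thesis using fin cG dv by arith
qed



lemma r40:
  fixes r :: "'a::{field,finite}"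
  assumes card: "card (UNIV::'a set) = 3 ^ n" and n: "n = 4*k"
    and r: "r \<in> GF81" and r0: "r \<noteq> 0" and ns: "\<not> (\<exists>y\<in>GF81. y ^ 2 = r)"
  shows "r ^ 40 = -1"
proof -
  have "r * r^80 = r * 1" using r unfolding GF81_def by (simp add: power_Suc[symmetric])
  hence r80: "r^80 = 1" using r0 by simp
  have "(r^40 - 1) * (r^40 + 1) = r^80 - 1" by (simp add: algebra_simps power2_eq_square power_add[symmetric])
  hence "(r^40 - 1) * (r^40 + 1) = 0" using r80 by simp
  hence "r^40 = 1 \<or> r^40 = -1" by (auto simp: eq_neg_iff_add_eq_0)
  moreover have "r^40 \<noteq> 1"
  proof
    assume r40: "r^40 = 1"
    have "(3::nat)^n = 81^k" using n by (simp add: power_mult)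
    hence cd: "card (UNIV::'a set) - 1 = 80 * (\<Sum>i<k. 81^i)" using card geo81[of k] by simp
    have S: "80 \<le> card {x::'a. x^80 = 1}" by (rule card_pow_eq_1_ge[OF _ cd]) simp
    let ?T = "{z::'a. z^40 = 1}"
    have T: "card ?T \<le> 40" by (rule card_pow_eq_le) simp
    have rT: "r \<in> ?T" using r40 by simp
    have sub: "{x::'a. x^80 = 1} \<subseteq> (\<Union>z\<in>?T-{r}. {y. y^2 = z})"
    proof
      fix y :: 'a assume "y \<in> {x. x^80 = 1}"
      hence y80: "y^80 = 1" by simp
      have "(y^2)^40 = 1" using y80 by (simp add: power_mult[symmetric])
      moreover have "y \<in> GF81"
      proof -
        have "y^81 = y^(80+1)" by simp
        also have "\<dots> = y^80 * y" by (simp only: power_add power_one_right)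
        finally show ?thesis unfolding GF81_def using y80 by simp
      qed
      hence "y^2 \<noteq> r" using ns by blast
      ultimately show "y \<in> (\<Union>z\<in>?T-{r}. {y. y^2 = z})" by blast
    qed
    have "card {x::'a. x^80 = 1} \<le> card (\<Union>z\<in>?T-{r}. {y::'a. y^2 = z})" by (intro card_mono sub) simp
    also have "\<dots> \<le> (\<Sum>z\<in>?T-{r}. card {y::'a. y^2 = z})" by (rule card_UN_le) simp
    also have "\<dots> \<le> (\<Sum>z\<in>?T-{r}. 2)" by (intro sum_mono card_pow_eq_le) simp
    also have "\<dots> = 2 * (card ?T - 1)" using rT by (simp add: card_Diff_singleton)
    finally show False using S T by simp
  qed
  ultimately show ?thesis by blast
qed

lemma four_dvd:
  fixes R :: "'a::{field,finite} set" and i :: 'a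
  assumes z: "0 \<in> R" and mi: "\<And>y. y \<in> R \<Longrightarrow> i*y \<in> R" and ng: "\<And>y. y \<in> R \<Longrightarrow> -y \<in> R"
    and ii: "i*i = -1" and two: "(2::'a) \<noteq> 0"
  shows "4 dvd (card R - 1)"
proof -
  have iiy: "i*(i*y) = -y" for y using ii by (simp add: mult.assoc[symmetric])
  have i0: "i \<noteq> 0" using ii by auto
  have om1: "(1::'a) \<noteq> -1"
  proof
    assume "(1::'a) = -1" hence "(1::'a) + 1 = 0" by (simp add: eq_neg_iff_add_eq_0)
    thus False using two by (simp add: one_add_one)
  qed
  have i1: "i \<noteq> 1" using ii om1 by auto
  have im1: "i \<noteq> -1" using ii om1 by auto
  have ini: "i \<noteq> -i" using i0 two by (auto simp: eq_neg_iff_add_eq_0 mult_2[symmetric])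
  define U where "U = {1, i, -1, -i}"
  have cU: "card U = 4" unfolding U_def using i1 im1 om1 ini i0
    by (auto simp: eq_neg_iff_add_eq_0 add.commute)
  define Orb where "Orb y = (\<lambda>u. u*y) ` U" for y
  have Orbe: "Orb y = {y, i*y, -y, -(i*y)}" for y unfolding Orb_def U_def by auto
  have cOrb: "card (Orb y) = 4" if "y \<noteq> 0" for y
  proof -
    have "inj_on (\<lambda>u. u*y) U" using that by (auto intro!: inj_onI)
    thus ?thesis unfolding Orb_def using cU by (simp add: card_image)
  qed
  have Orbsub: "z \<in> Orb y \<Longrightarrow> Orb z = Orb y" for z y
    unfolding Orbe using iiy by (auto simp: mult.assoc)
  let ?C = "Orb ` (R - {0})"
  have U: "\<Union>?C = R - {0}"
  proof
    show "\<Union>?C \<subseteq> R - {0}" unfolding Orbe using mi ng i0 by auto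
    show "R - {0} \<subseteq> \<Union>?C" unfolding Orbe by auto
  qed
  have "4 * card ?C = card (\<Union>?C)"
  proof (rule card_partition)
    show "card c = 4" if "c \<in> ?C" for c using cOrb that by auto
    show "c1 \<inter> c2 = {}" if "c1 \<in> ?C" "c2 \<in> ?C" "c1 \<noteq> c2" for c1 c2
    proof -
      from that obtain y1 y2 where "c1 = Orb y1" "c2 = Orb y2" "Orb y1 \<noteq> Orb y2" by blast
      thus ?thesis using Orbsub by blast
    qed
  qed simp_all
  hence "4 * card ?C = card R - 1" using U z by (simp add: card_Diff_singleton)
  thus ?thesis by (metis dvd_triv_left)
qed



lemma Lpow:
  fixes A B y :: "'a::field"
  assumes C3: "(3::'a) = 0"
  shows "(Lmap n M K A B y) ^ (3^P) = (A*y)^(3^(n-M)*3^P) + A^(3^P)*y^(3^M*3^P)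
          + (B*y)^(3^(n-K)*3^P) + B^(3^P)*y^(3^K*3^P)"
  unfolding Lmap_def by (simp only: frob[OF C3] power_mult_distrib power_mult)

lemma pow_gf9:
  assumes "(i::'a::field)^9 = i"
  shows "i^(3^(2*m)) = i"
proof (induction m)
  case 0 then show ?case by simp
next
  case (Suc m)
  have "i^(3^(2*Suc m)) = (i^(3^(2*m)))^9" by (simp add: power_mult[symmetric] power_add mult.commute)
  thus ?case using Suc assms by simp
qed

lemma pow_gf81:
  assumes "(i::'a::field)^81 = i"
  shows "i^(81^m) = i"
proof (induction m)
  case 0 then show ?case by simp
next
  case (Suc m)
  have "i^(81^Suc m) = (i^(81^m))^81" by (simp add: power_mult[symmetric] mult.commute)
  thus ?case using Suc assms by simp
qed

lemma Q_scale:
  fixes A B i :: "'a::field"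
  assumes i9: "i^9 = i" and ii: "i*i = -1"
  shows "tr n (A * (i*x) ^ (3^(2*M)+1) + B * (i*x) ^ (3^(2*K)+1))
       = - tr n (A * x ^ (3^(2*M)+1) + B * x ^ (3^(2*K)+1))"
proof -
  have e: "(i*x)^(3^(2*m)+1) = - (x^(3^(2*m)+1))" for m
  proof -
    have "(i*x)^(3^(2*m)+1) = i^(3^(2*m)+1) * x^(3^(2*m)+1)" by (rule power_mult_distrib)
    also have "i^(3^(2*m)+1) = i^(3^(2*m)) * i" by (simp only: power_add power_one_right)
    also have "\<dots> = -1" using pow_gf9[OF i9, of m] ii by simp
    finally show ?thesis by simp
  qed
  show ?thesis unfolding e by (simp add: tr_neg[symmetric] algebra_simps)
qed



lemma dim3_zero: "dim3 {0::'a::field} = 0"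
  unfolding dim3_def
proof (rule Least_eq_0)
  show "\<exists>B. finite B \<and> card B = 0 \<and> B \<subseteq> {0::'a} \<and> {0} = span3 B"
    by (rule exI[of _ "{}"]) (simp add: span3_def)
qed

lemma p3: "a + b = c + d \<Longrightarrow> (3::nat)^a * 3^b = 3^c * 3^d"
  by (metis power_add)

theorem mainTheorem5:
  fixes k n :: nat and a r :: "'a::{field,finite}"
  assumes "odd k"
    and "n = 4 * k"
    and "card (UNIV :: 'a set) = 3 ^ n"
    and "a \<noteq> 0"
    and "r \<in> GF81"
    and "r \<noteq> 0"
    and "\<not> (\<exists>y\<in>GF81. y ^ 2 = r)"
  shows "qrank n (\<lambda>x. tr n (a * x ^ (3 ^ (2 * (k + 1)) + 1) - x ^ (3 ^ (2 * k) + 1)))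
           \<in> {n, n - 2, n - 4}
       \<and> qrank n (\<lambda>x. tr n (a * r * x ^ (3 ^ (2 * (k + 1)) + 1)
                              - r ^ ((3 ^ (2 * k) + 1) ^ 2 div 20) * x ^ (3 ^ (2 * k) + 1))) = n"
proof -
  note card = assms(3)
  obtain j where kj: "k = 2*j+1" using assms(1) oddE by blast
  have n: "n > 0" using assms(2) kj by simp
  have C3: "(3::'a) = 0" by (rule char3[OF card])
  have F: "\<And>w::'a. w ^ (3^n) = w" using fermat card by metis
  have two: "(2::'a) \<noteq> 0" by (rule two_ne0[OF C3])
  have r40: "r^40 = -1" by (rule r40[OF card assms(2) assms(5) assms(6) assms(7)])
  have r81: "r^81 = r" using assms(5) unfolding GF81_def by simp
  have r80: "r^80 = 1"
  proof -
    have "r * r^80 = r * 1" using r81 by (simp add: power_Suc[symmetric])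
    thus ?thesis using assms(6) by simp
  qed
  define M where "M = 2*(k+1)"
  define K where "K = 2*k"
  have M: "M \<le> n" and K: "K \<le> n" using assms(2) kj unfolding M_def K_def by simp_all
  have nM: "n - M = 4*j" and nK: "n - K = 2*k" using assms(2) kj unfolding M_def K_def by simp_all
  have Fm: "w ^ (3^n * m) = w ^ m" for w :: 'a and m by (simp add: power_mult F)
  have e1: "(3::nat)^(n-M) * 3^M = 3^n" using M by (simp add: power_add[symmetric])
  have e2: "(3::nat)^M * 3^M = 3^n * 81"
    using p3[of M M n 4] assms(2) kj unfolding M_def by simp
  have e3: "(3::nat)^(n-K) * 3^M = 3^n * 9"
    using p3[of "n-K" M n 2] assms(2) kj unfolding M_def K_def by simp
  have e4: "(3::nat)^K * 3^M = 3^n * 9"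
    using p3[of K M n 2] assms(2) kj unfolding M_def K_def by simp
  define i where "i = r^20"
  have ii: "i*i = -1" unfolding i_def using r40 by (simp add: power_add[symmetric])
  have i0: "i \<noteq> 0" using ii by auto
  have i9: "i^9 = i"
  proof -
    have "i^9 = i * (i*i)^4" by (simp add: power_mult_distrib power_add[symmetric] power_Suc[symmetric])
    thus ?thesis using ii by simp
  qed
  define Q1 where "Q1 = (\<lambda>x::'a. tr n (a * x ^ (3^M+1) + (-1) * x ^ (3^K+1)))"
  have Q1e: "(\<lambda>x. tr n (a * x ^ (3 ^ (2 * (k + 1)) + 1) - x ^ (3 ^ (2 * k) + 1))) = Q1"
    unfolding Q1_def M_def K_def by simp
  define R1 where "R1 = qrad Q1"
  have L1: "Lmap n M K a (-1) y = 0" if "y \<in> R1" for y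
    using rad_L[OF card n M K] that unfolding R1_def Q1_def by blast
  have root1: "a^(3^M) * y^81 + (-2) * y^9 + a * y = 0" if "y \<in> R1" for y
  proof -
    have "(Lmap n M K a (-1) y) ^ (3^M) = 0" using L1[OF that] by simp
    hence "(a*y)^(3^(n-M)*3^M) + a^(3^M)*y^(3^M*3^M)
          + ((-1)*y)^(3^(n-K)*3^M) + (-1)^(3^M)*y^(3^K*3^M) = 0"
      unfolding Lpow[OF C3] .
    hence "a*y + a^(3^M)*y^81 + (-y)^9 + (-1)^(3^M)*y^9 = 0"
      unfolding e1 e2 e3 e4 Fm by (simp add: F)
    moreover have "(-1::'a)^(3^M) = -1" using neg_pow3[of "1::'a" M] by simp
    moreover have "(-y)^9 = - (y^9)" by (simp add: power_minus_odd)
    ultimately show ?thesis by (simp add: algebra_simps)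
  qed
  define P where "P = monom (a^(3^M)) 81 + monom (-2) 9 + monom a 1"
  have Pp: "poly P y = a^(3^M) * y^81 + (-2) * y^9 + a * y" for y
    unfolding P_def by (simp add: poly_monom)
  have "coeff P 1 = a" unfolding P_def by (simp add: coeff_monom)
  hence P0: "P \<noteq> 0" using assms(4) by auto
  have "degree P \<le> 81" unfolding P_def
    by (intro degree_add_le) (simp_all add: degree_monom_le order.trans[OF degree_monom_le])
  hence "card {y. poly P y = 0} \<le> 81" using card_poly_roots_bound[OF P0] by simp
  moreover have "R1 \<subseteq> {y. poly P y = 0}" using root1 Pp by auto
  ultimately have c81: "card R1 \<le> 81" by (meson card_mono finite order.trans)
  interpret S1: subsp R1
    by unfold_locales (auto simp: C3 R1_def intro: rad_zero rad_add rad_neg)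
  have cd1: "card R1 = 3 ^ dim3 R1" by (rule S1.card_dim)
  have Qs: "Q1 (i*x) = - Q1 x" for x
    unfolding Q1_def M_def K_def using Q_scale[OF i9 ii, where n=n and A=a and M="k+1" and B="-1" and K=k and x=x] by simp
  have mi: "i*y \<in> R1" if "y \<in> R1" for y
    unfolding R1_def by (rule rad_scale[where q=Q1 and c=i, OF Qs i0]) (use that R1_def in simp)
  have d4: "4 dvd (card R1 - 1)"
    by (rule four_dvd[OF S1.zero mi S1.neg ii two])
  have part1: "dim3 R1 \<in> {0, 2, 4}"
  proof -
    have "(3::nat)^dim3 R1 \<le> 3^4" using c81 cd1 by simp
    hence le: "dim3 R1 \<le> 4" using power_increasing_iff[of "3::nat" "dim3 R1" 4] by linarith
    have "dim3 R1 \<noteq> 1" using d4 cd1 by auto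
    moreover have "dim3 R1 \<noteq> 3" using d4 cd1 by auto
    ultimately show ?thesis using le by auto
  qed
  have goal1: "qrank n Q1 \<in> {n, n - 2, n - 4}"
    using part1 unfolding qrank_def R1_def[symmetric] by auto
  obtain w where w: "((3::nat) ^ (2*k) + 1)^2 div 20 = 5 + 80*w" using dd_mod[OF kj] by blast
  define s where "s = r ^ 5"
  have sdef: "r ^ (((3::nat) ^ (2*k) + 1)^2 div 20) = s"
    unfolding w s_def by (simp add: power_add power_mult r80)
  have s0: "s \<noteq> 0" unfolding s_def using assms(6) by simp
  have r4j: "r^(3^(4*j)) = r"
  proof -
    have "(3::nat)^(4*j) = 81^j" by (simp add: power_mult)
    thus ?thesis using pow_gf81[OF r81, of j] by simp
  qed
  have sK: "s^(3^(2*k)) = - s"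
  proof -
    have s81: "s^81 = s"
    proof -
      have "s^81 = (r^81)^5" unfolding s_def by (metis power_mult mult.commute)
      thus ?thesis unfolding s_def using r81 by simp
    qed
    have "(3::nat)^(2*k) = 81^j * 9" using kj by (simp add: power_mult power_add)
    hence "s^(3^(2*k)) = (s^(81^j))^9" by (simp add: power_mult)
    also have "\<dots> = s^9" using pow_gf81[OF s81, of j] by simp
    also have "\<dots> = r^40 * r^5" unfolding s_def by (simp add: power_mult[symmetric] power_add[symmetric])
    finally show ?thesis using r40 s_def by simp
  qed
  define Q2 where "Q2 = (\<lambda>x::'a. tr n (a * r * x ^ (3^M+1) + (-s) * x ^ (3^K+1)))"
  have Q2e: "(\<lambda>x. tr n (a * r * x ^ (3 ^ (2 * (k + 1)) + 1)
                  - r ^ ((3 ^ (2 * k) + 1) ^ 2 div 20) * x ^ (3 ^ (2 * k) + 1))) = Q2"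
    unfolding Q2_def M_def K_def sdef by simp
  define R2 where "R2 = qrad Q2"
  define e where "e = (\<Sum>i<k. (81::nat)^i)"
  have e: "80 * e + 1 = (3::nat)^n" "odd e"
  proof -
    have "(3::nat)^n = 81^k" using assms(2) by (simp add: power_mult)
    thus "80 * e + 1 = (3::nat)^n" unfolding e_def using geo81[of k] by simp
    show "odd e" unfolding e_def using geo81_odd[of k] assms(1) by simp
  qed
  have ce: "card (UNIV::'a set) - 1 = 80 * e" using card e(1) by simp
  have fz: "z ^ ((80*v+1)*e) = z ^ e" if "z \<noteq> 0" for z :: 'a and v
  proof -
    have "z ^ (80*e) = 1" using fermat_nz[OF that] ce by simp
    have "(80*v+1)*e = (80*e)*v + e" by (simp add: algebra_simps)
    hence "z^((80*v+1)*e) = z^((80*e)*v) * z^e" by (simp only: power_add)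
    also have "z^((80*e)*v) = (z^(80*e))^v" by (rule power_mult)
    finally show ?thesis using \<open>z ^ (80*e) = 1\<close> by simp
  qed
  obtain v1 where v1: "(3::nat)^(4*j) = 80*v1+1" using pow81[of j] by (auto simp: power_mult)
  obtain v2 where v2: "(3::nat)^M = 80*v2+1"
  proof -
    have "(3::nat)^M = 81^(j+1)" unfolding M_def using kj by (simp add: power_mult)
    thus ?thesis using pow81[of "j+1"] that by auto
  qed
  have R2z: "y = 0" if "y \<in> R2" for y
  proof (rule ccontr)
    assume y0: "y \<noteq> 0"
    have "Lmap n M K (a*r) (-s) y = 0" using rad_L[OF card n M K] that unfolding R2_def Q2_def by blast
    hence h: "(a*r*y)^(3^(4*j)) + a*r*y^(3^M) + ((-s)*y)^(3^(2*k)) + (-s)*y^(3^(2*k)) = 0"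
      unfolding Lmap_def nM nK unfolding K_def .
    have t1: "(a*r*y)^(3^(4*j)) = r * (a*y)^(3^(4*j))"
    proof -
      have "(a*r*y)^(3^(4*j)) = r^(3^(4*j)) * (a*y)^(3^(4*j))"
        by (simp only: power_mult_distrib[symmetric] mult.commute mult.left_commute)
      thus ?thesis using r4j by simp
    qed
    have t2: "((-s)*y)^(3^(2*k)) = s * y^(3^(2*k))"
    proof -
      have "((-s)*y)^(3^(2*k)) = (-s)^(3^(2*k)) * y^(3^(2*k))" by (rule power_mult_distrib)
      also have "(-s)^(3^(2*k)) = s" using sK neg_pow3[of s "2*k"] by simp
      finally show ?thesis .
    qed
    define X where "X = (a*y)^(3^(4*j))"
    define Y where "Y = y^(3^M)"
    define Z where "Z = y^(3^(2*k))"
    have "r * X + a*r*Y + s * Z + (-s)*Z = 0" using h unfolding t1 t2 X_def Y_def Z_def .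
    hence "r * (X + a*Y) = 0" by (simp add: algebra_simps)
    hence "r * ((a*y)^(3^(4*j)) + a*y^(3^M)) = 0" unfolding X_def Y_def .
    hence eq: "(a*y)^(3^(4*j)) = - (a*y^(3^M))" using assms(6) by (simp add: eq_neg_iff_add_eq_0)
    have ay0: "a*y \<noteq> 0" using assms(4) y0 by simp
    have "((a*y)^(3^(4*j)))^e = (a*y)^((80*v1+1)*e)" by (simp only: power_mult[symmetric] v1)
    hence "((a*y)^(3^(4*j)))^e = (a*y)^e" using fz[OF ay0, of v1] by simp
    moreover have "(- (a*y^(3^M)))^e = - ((a*y)^e)"
    proof -
      have "(- (a*y^(3^M)))^e = - (a^e * (y^(3^M))^e)" using e(2) by (simp add: power_minus_odd power_mult_distrib)
      also have "(y^(3^M))^e = y^((80*v2+1)*e)" by (simp only: power_mult[symmetric] v2)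
      also have "\<dots> = y^e" by (rule fz[OF y0])
      finally show ?thesis by (simp add: power_mult_distrib)
    qed
    ultimately have "(a*y)^e = - ((a*y)^e)" using eq by simp
    hence "(a*y)^e + (a*y)^e = 0" by (simp only: eq_neg_iff_add_eq_0)
    hence "2 * (a*y)^e = 0" by (simp only: mult_2)
    hence "(a*y)^e = 0" using two by simp
    thus False using ay0 by simp
  qed
  have "R2 = {0}" using R2z rad_zero unfolding R2_def by blast
  hence goal2: "qrank n Q2 = n" unfolding qrank_def R2_def[symmetric] by (simp add: dim3_zero)
  show ?thesis unfolding Q1e Q2e using goal1 goal2 by blast
qed

end
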